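(* Let $\mathfrak{n}$ be a real nilpotent Lie algebra and $J$ a $3$-step complex structure on $\mathfrak{n}$. Then no inner product on $\mathfrak{n}$ that is Hermitian with respect to $J$ is pluriclosed.
   Context: A complex structure on a real Lie algebra $\mathfrak{g}$ is a linear map $J:\mathfrak{g}\to\mathfrak{g}$ with $J^2=-I$ and $N_J(x,y):=[x,y]+J([Jx,y]+[x,Jy])-[Jx,Jy]=0$ for all $x,y\in\mathfrak{g}$. Given such $J$, define inductively $\mathfrak{a}_0(J)=0$ and $\mathfrak{a}_\ell(J)=\{x\in\mathfrak{g}: [x,\mathfrak{g}]\subset\mathfrak{a}_{\ell-1}(J)\text{ and }[Jx,\mathfrak{g}]\subset\mathfrak{a}_{\ell-1}(J)\}$ for $\ell\ge1$; $J$ is $t$-step if $t$ is the smallest integer with $\mathfrak{a}_t(J)=\mathfrak{g}$. An inner product $\langle\cdot,\cdot\rangle$ is Hermitian if $\langle Jx,Jy\rangle=\langle x,y\rangle$. Its torsion 3-form is $c(x,y,z)=-\langle[Jx,Jy],z\rangle-\langle[Jy,Jz],x\rangle-\langle[Jz,Jx],y\rangle$, and $\langle\cdot,\cdot\rangle$ is pluriclosed if $dc=0$, where $d$ is the Chevalley–Eilenberg differential on $\Lambda^*\mathfrak{g}^*$ (equivalently the corresponding left-invariant 3-form on the Lie group is closed). *)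

theory Defs
  imports "HOL-Analysis.Analysis"
begin

text \<open>A real finite-dimensional Lie algebra is modelled on a Euclidean space type 'a
(used only as a finite-dimensional real vector space; its built-in inner product is
never used) together with a bracket br.\<close>

definition lie_algebra :: "('a::real_vector \<Rightarrow> 'a \<Rightarrow> 'a) \<Rightarrow> bool" where
  "lie_algebra br \<longleftrightarrow> bilinear br \<and> (\<forall>x. br x x = 0) \<and>
     (\<forall>x y z. br x (br y z) + br y (br z x) + br z (br x y) = 0)"

fun lcs :: "('a::real_vector \<Rightarrow> 'a \<Rightarrow> 'a) \<Rightarrow> nat \<Rightarrow> 'a set" where
  "lcs br 0 = UNIV"
| "lcs br (Suc k) = span {br x y | x y. y \<in> lcs br k}"

definition nilpotent_lie :: "('a::real_vector \<Rightarrow> 'a \<Rightarrow> 'a) \<Rightarrow> bool" where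
  "nilpotent_lie br \<longleftrightarrow> (\<exists>k. lcs br k = {0})"

definition nijenhuis :: "('a::real_vector \<Rightarrow> 'a \<Rightarrow> 'a) \<Rightarrow> ('a \<Rightarrow> 'a) \<Rightarrow> 'a \<Rightarrow> 'a \<Rightarrow> 'a" where
  "nijenhuis br J x y = br x y + J (br (J x) y + br x (J y)) - br (J x) (J y)"

definition complex_structure :: "('a::real_vector \<Rightarrow> 'a \<Rightarrow> 'a) \<Rightarrow> ('a \<Rightarrow> 'a) \<Rightarrow> bool" where
  "complex_structure br J \<longleftrightarrow> linear J \<and> (\<forall>x. J (J x) = - x) \<and>
     (\<forall>x y. nijenhuis br J x y = 0)"

fun asc :: "('a::real_vector \<Rightarrow> 'a \<Rightarrow> 'a) \<Rightarrow> ('a \<Rightarrow> 'a) \<Rightarrow> nat \<Rightarrow> 'a set" where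
  "asc br J 0 = {0}"
| "asc br J (Suc l) = {x. (\<forall>y. br x y \<in> asc br J l) \<and> (\<forall>y. br (J x) y \<in> asc br J l)}"

definition is_t_step :: "('a::real_vector \<Rightarrow> 'a \<Rightarrow> 'a) \<Rightarrow> ('a \<Rightarrow> 'a) \<Rightarrow> nat \<Rightarrow> bool" where
  "is_t_step br J t \<longleftrightarrow> asc br J t = UNIV \<and> (\<forall>s<t. asc br J s \<noteq> UNIV)"

definition inner_product :: "('a::real_vector \<Rightarrow> 'a \<Rightarrow> real) \<Rightarrow> bool" where
  "inner_product g \<longleftrightarrow> bilinear g \<and> (\<forall>x y. g x y = g y x) \<and> (\<forall>x. x \<noteq> 0 \<longrightarrow> g x x > 0)"

definition hermitian :: "('a::real_vector \<Rightarrow> 'a) \<Rightarrow> ('a \<Rightarrow> 'a \<Rightarrow> real) \<Rightarrow> bool" where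
  "hermitian J g \<longleftrightarrow> inner_product g \<and> (\<forall>x y. g (J x) (J y) = g x y)"

definition torsion :: "('a::real_vector \<Rightarrow> 'a \<Rightarrow> 'a) \<Rightarrow> ('a \<Rightarrow> 'a) \<Rightarrow> ('a \<Rightarrow> 'a \<Rightarrow> real)
    \<Rightarrow> 'a \<Rightarrow> 'a \<Rightarrow> 'a \<Rightarrow> real" where
  "torsion br J g x y z = - g (br (J x) (J y)) z - g (br (J y) (J z)) x - g (br (J z) (J x)) y"

text \<open>Chevalley--Eilenberg differential of a 3-form (trivial coefficients):
 dc(x0,..,x3) = sum_{i<j} (-1)^(i+j) c([xi,xj], x0,..,^xi,..,^xj,..,x3).\<close>
definition ce_d3 :: "('a::real_vector \<Rightarrow> 'a \<Rightarrow> 'a) \<Rightarrow> ('a \<Rightarrow> 'a \<Rightarrow> 'a \<Rightarrow> real)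
    \<Rightarrow> 'a \<Rightarrow> 'a \<Rightarrow> 'a \<Rightarrow> 'a \<Rightarrow> real" where
  "ce_d3 br c x0 x1 x2 x3 =
     - c (br x0 x1) x2 x3 + c (br x0 x2) x1 x3 - c (br x0 x3) x1 x2
     - c (br x1 x2) x0 x3 + c (br x1 x3) x0 x2 - c (br x2 x3) x0 x1"

definition pluriclosed :: "('a::real_vector \<Rightarrow> 'a \<Rightarrow> 'a) \<Rightarrow> ('a \<Rightarrow> 'a) \<Rightarrow> ('a \<Rightarrow> 'a \<Rightarrow> real) \<Rightarrow> bool" where
  "pluriclosed br J g \<longleftrightarrow> (\<forall>x0 x1 x2 x3. ce_d3 br (torsion br J g) x0 x1 x2 x3 = 0)"

end

theory Submission
  imports Defs
begin

definition cen :: "('a::real_vector \<Rightarrow> 'a \<Rightarrow> 'a) \<Rightarrow> ('a \<Rightarrow> 'a) \<Rightarrow> 'a \<Rightarrow> bool" where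
  "cen br J u \<longleftrightarrow> (\<forall>y. br u y = 0) \<and> (\<forall>y. br (J u) y = 0)"

lemma lie_antisym:
  assumes "lie_algebra br"
  shows "br x y = - br y x"
proof -
  have B: "bilinear br" and Z: "\<And>x. br x x = 0" using assms unfolding lie_algebra_def by auto
  have "0 = br (x + y) (x + y)" using Z by simp
  also have "\<dots> = br x x + br x y + br y x + br y y"
    using B by (simp add: bilinear_ladd bilinear_radd)
  finally show ?thesis using Z by (simp add: eq_neg_iff_add_eq_0 add.commute)
qed

lemma cen_facts:
  assumes "lie_algebra br" "cen br J u"
  shows "br u y = 0" "br (J u) y = 0" "br y u = 0" "br y (J u) = 0"
  using assms lie_antisym[OF assms(1)] unfolding cen_def by (metis neg_equal_0_iff_equal)+

lemma cen_closed:
  assumes "lie_algebra br" "complex_structure br J" "cen br J u" "cen br J v"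
  shows "cen br J (u + v)" "cen br J (J u)"
proof -
  have B: "bilinear br" using assms(1) unfolding lie_algebra_def by auto
  have L: "linear J" and JJ: "\<And>x. J (J x) = - x" using assms(2) unfolding complex_structure_def by auto
  show "cen br J (u + v)" using assms(3,4) B L
    by (simp add: cen_def bilinear_ladd linear_add)
  show "cen br J (J u)" using assms(3) B JJ
    by (simp add: cen_def bilinear_lneg)
qed

lemma tors_cen:
  assumes "lie_algebra br" "hermitian J g" "cen br J u"
  shows "torsion br J g u y w = - g (br (J y) (J w)) u"
proof -
  have G: "bilinear g" using assms(2) unfolding hermitian_def inner_product_def by auto
  show ?thesis unfolding torsion_def
    using cen_facts[OF assms(1,3)] G by (simp add: bilinear_lzero)
qed

lemma dc_formula:
  assumes lie: "lie_algebra br" and cs: "complex_structure br J" and h: "hermitian J g"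
    and ha1: "\<And>y. cen br J (br a y)" and ha2: "\<And>y. cen br J (br (J a) y)"
    and aJa: "br a (J a) = 0"
  shows "ce_d3 br (torsion br J g) a (J a) b (J b) =
     - (g (br a b) (br a b) + g (br a (J b)) (br a (J b)) + g (br (J a) b) (br (J a) b)
        + g (br (J a) (J b)) (br (J a) (J b)))
     + g (br (J (br b (J b))) (J a)) (J a) - g (br a (J (br b (J b)))) a"
proof -
  have B: "bilinear br" using lie unfolding lie_algebra_def by auto
  have L: "linear J" and JJ: "\<And>x. J (J x) = - x" using cs unfolding complex_structure_def by auto
  have G: "bilinear g" using h unfolding hermitian_def inner_product_def by auto
  define w where "w = br b (J b)"
  have c0: "cen br J 0" using B by (simp add: cen_def bilinear_lzero L linear_0)
  have t1: "torsion br J g (br a (J a)) b (J b) = 0"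
    using tors_cen[OF lie h c0] aJa G by (simp add: bilinear_rzero)
  have t2: "torsion br J g (br a b) (J a) (J b) = - g (br a b) (br a b)"
    using tors_cen[OF lie h ha1] JJ B by (simp add: bilinear_lneg bilinear_rneg)
  have t3: "torsion br J g (br a (J b)) (J a) b = g (br a (J b)) (br a (J b))"
    using tors_cen[OF lie h ha1] JJ B G by (simp add: bilinear_lneg bilinear_rneg)
  have t4: "torsion br J g (br (J a) b) a (J b) = g (br (J a) b) (br (J a) b)"
    using tors_cen[OF lie h ha2] JJ B G by (simp add: bilinear_lneg bilinear_rneg)
  have t5: "torsion br J g (br (J a) (J b)) a b = - g (br (J a) (J b)) (br (J a) (J b))"
    using tors_cen[OF lie h ha2] JJ B G by (simp add: bilinear_lneg bilinear_rneg)
  have e1: "br (J a) (- a) = 0" using B aJa lie_antisym[OF lie, of "J a" a] by (simp add: bilinear_rneg)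
  have t6: "torsion br J g w a (J a) = - g (br (J w) (J a)) (J a) + g (br a (J w)) a"
    unfolding torsion_def using JJ B G e1 by (simp add: bilinear_lneg bilinear_lzero)
  show ?thesis unfolding ce_d3_def using t1 t2 t3 t4 t5 t6 unfolding w_def by simp
qed


lemma g_facts:
  assumes "hermitian J g" "complex_structure br J"
  shows "g u (J p) = - g (J u) p" "g x x \<ge> 0" "g x x = 0 \<longleftrightarrow> x = 0" "g 0 x = 0"
proof -
  have G: "bilinear g" and pos: "\<And>x. x \<noteq> 0 \<Longrightarrow> g x x > 0" and H: "\<And>x y. g (J x) (J y) = g x y"
    using assms(1) unfolding hermitian_def inner_product_def by auto
  have JJ: "\<And>x. J (J x) = - x" using assms(2) unfolding complex_structure_def by auto
  have "g u (J p) = g (J u) (J (J p))" using H by simp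
  also have "\<dots> = - g (J u) p" using JJ G by (simp add: bilinear_rneg)
  finally show "g u (J p) = - g (J u) p" .
  show z: "g 0 x = 0" using G by (simp add: bilinear_lzero)
  show "g x x \<ge> 0" using pos[of x] z by (cases "x = 0") auto
  show "g x x = 0 \<longleftrightarrow> x = 0" using pos[of x] z by (cases "x = 0") auto
qed

lemma key:
  assumes lie: "lie_algebra br" and cs: "complex_structure br J" and h: "hermitian J g"
    and pc: "pluriclosed br J g"
    and ha1: "\<And>y. cen br J (br a y)" and ha2: "\<And>y. cen br J (br (J a) y)"
    and aJa: "br a (J a) = 0"
  shows "br a b = 0 \<and> br (J a) b = 0"
proof -
  have B: "bilinear br" using lie unfolding lie_algebra_def by auto
  have L: "linear J" and JJ: "\<And>x. J (J x) = - x" using cs unfolding complex_structure_def by auto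
  have G: "bilinear g" using h unfolding hermitian_def inner_product_def by auto
  define w where "w = br b (J b)"
  define q1 where "q1 = br (J w) (J a)"
  define q2 where "q2 = br a (J w)"
  define k where "k = J q1 + q2"
  have cq1: "cen br J q1" unfolding q1_def
    using ha2 lie_antisym[OF lie, of "J w" "J a"] B
    by (metis cen_closed(2)[OF lie cs] JJ bilinear_lneg add.inverse_inverse)
  have cq2: "cen br J q2" unfolding q2_def using ha1 by simp
  have ck: "cen br J k" unfolding k_def using cen_closed[OF lie cs] cq1 cq2 by simp
  define S where "S = g (br a b) (br a b) + g (br a (J b)) (br a (J b)) + g (br (J a) b) (br (J a) b)
        + g (br (J a) (J b)) (br (J a) (J b))"
  have d1: "ce_d3 br (torsion br J g) a (J a) b (J b) = - S + g q1 (J a) - g q2 a"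
    using dc_formula[OF lie cs h ha1 ha2 aJa, of b] unfolding S_def q1_def q2_def w_def by simp
  have Jak: "J (a + k) = J a + J k" using L by (simp add: linear_add)
  have e1: "\<And>y. br (a + k) y = br a y" using B cen_facts[OF lie ck] by (simp add: bilinear_ladd)
  have e2: "\<And>y. br (J (a + k)) y = br (J a) y" using B cen_facts[OF lie ck] Jak by (simp add: bilinear_ladd)
  have e3: "\<And>y. br y (J (a + k)) = br y (J a)" using B cen_facts[OF lie ck] Jak by (simp add: bilinear_radd)
  have aJa': "br (a + k) (J (a + k)) = 0" using e1 e3 aJa by simp
  have d2: "ce_d3 br (torsion br J g) (a + k) (J (a + k)) b (J b) = - S + g q1 (J a + J k) - g q2 (a + k)"
    using dc_formula[OF lie cs h, of "a + k", OF _ _ aJa', of b] ha1 ha2 e1 e2 e3 Jak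
    unfolding S_def q1_def q2_def w_def by simp
  have z1: "- S + g q1 (J a) - g q2 a = 0" using d1 pc unfolding pluriclosed_def by metis
  have z2: "- S + g q1 (J a + J k) - g q2 (a + k) = 0" using d2 pc unfolding pluriclosed_def by metis
  have f1: "g q1 (J k) = - g (J q1) k" using g_facts(1)[OF h cs] by blast
  have f2: "g k k = g (J q1) k + g q2 k" unfolding k_def[symmetric, THEN sym] using G
    by (simp add: k_def bilinear_ladd)
  have "g q1 (J a + J k) - g q2 (a + k) = g q1 (J a) - g q2 a - g k k"
    using G f1 f2 by (simp add: bilinear_radd)
  then have "g k k = 0" using z1 z2 by simp
  then have k0: "k = 0" using g_facts(3)[OF h cs] by simp
  have "g q1 (J a) - g q2 a = - g k a" unfolding k_def using G g_facts(1)[OF h cs]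
    by (simp add: bilinear_ladd algebra_simps)
  then have "S = 0" using z1 k0 g_facts(4)[OF h cs] by simp
  then have "g (br a b) (br a b) = 0 \<and> g (br (J a) b) (br (J a) b) = 0"
    unfolding S_def using g_facts(2)[OF h cs] by (smt (verit))
  then show ?thesis using g_facts(3)[OF h cs] by simp
qed

theorem mainTheorem14:
  fixes br :: "'a::euclidean_space \<Rightarrow> 'a \<Rightarrow> 'a" and J :: "'a \<Rightarrow> 'a"
  assumes "lie_algebra br"
    and "nilpotent_lie br"
    and "complex_structure br J"
    and "is_t_step br J 3"
  shows "\<not> (\<exists>g. hermitian J g \<and> pluriclosed br J g)"
proof
  assume "\<exists>g. hermitian J g \<and> pluriclosed br J g"
  then obtain g where h: "hermitian J g" and pc: "pluriclosed br J g" by blast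
  have lie: "lie_algebra br" and cs: "complex_structure br J" using assms by auto
  have B: "bilinear br" using lie unfolding lie_algebra_def by auto
  have jac: "\<And>x y z. br x (br y z) + br y (br z x) + br z (br x y) = 0"
    using lie unfolding lie_algebra_def by auto
  have A1: "\<And>x. x \<in> asc br J 1 \<longleftrightarrow> cen br J x" by (simp add: cen_def)
  have A2: "\<And>x. x \<in> asc br J 2 \<longleftrightarrow> (\<forall>y. cen br J (br x y)) \<and> (\<forall>y. cen br J (br (J x) y))"
    by (simp add: numeral_2_eq_2 cen_def)
  have A3: "\<And>x. x \<in> asc br J 3 \<longleftrightarrow> (\<forall>y. br x y \<in> asc br J 2) \<and> (\<forall>y. br (J x) y \<in> asc br J 2)"
    by (simp add: numeral_3_eq_3 numeral_2_eq_2)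
  have U3: "asc br J 3 = UNIV" and N2: "asc br J 2 \<noteq> UNIV"
    using assms(4) unfolding is_t_step_def by auto
  obtain z where "z \<notin> asc br J 2" using N2 by blast
  then obtain u y where uy: "\<not> cen br J (br u y)" using A2 by blast
  define m where "m = br u y"
  have m2: "m \<in> asc br J 2" unfolding m_def using U3 A3 by blast
  then have h1: "\<And>y. cen br J (br m y)" and h2: "\<And>y. cen br J (br (J m) y)" using A2 by auto
  have "br (J m) (br u y) + br u (br y (J m)) + br y (br (J m) u) = 0" using jac by blast
  moreover have "br u (br y (J m)) = 0"
    using cen_facts(3)[OF lie, of J "br (J m) y" u] h2 lie_antisym[OF lie, of y "J m"] B
    by (simp add: bilinear_rneg)
  moreover have "br y (br (J m) u) = 0" using cen_facts(3)[OF lie h2] by simp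
  ultimately have "br (J m) m = 0" unfolding m_def by simp
  then have mJm: "br m (J m) = 0" using lie_antisym[OF lie, of m "J m"] by simp
  have "\<And>b. br m b = 0 \<and> br (J m) b = 0" using key[OF lie cs h pc h1 h2 mJm] by blast
  then have "cen br J m" unfolding cen_def by blast
  then show False using uy unfolding m_def by simp
qed

end
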